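(* Let $e\in\mathfrak{osp}(m|2n)_{\bar0}$ be nilpotent with orthosymplectic partition $(p|q)$, $p=(p_1\ge\cdots\ge p_r)$, $q=(q_1\ge\cdots\ge q_s)$. Then $\dim\mathfrak{osp}(m|2n)^e_{\bar1}=\sum_{i=1}^r\sum_{j=1}^s\min(p_i,q_j)$, which is half of $\dim\mathfrak{gl}(m|2n)^e_{\bar1}$.
   Context: $\mathfrak{osp}(m|2n)\subset\mathfrak{gl}(m|2n)=\mathrm{End}(V_0\oplus V_1)$ is the subalgebra preserving a nondegenerate supersymmetric form $\varphi$ ($V_0\perp V_1$, symmetric on $V_0$, skew on $V_1$): $\mathfrak{osp}(m|2n)_i=\{z\in\mathfrak{gl}(m|2n)_i\mid\varphi(zx,y)=-(-1)^{i\deg x}\varphi(x,zy)\}$. The partition $(p|q)$ consists of the Jordan types of $e|_{V_0}$ and $e|_{V_1}$; $\mathfrak{g}^e$ is the centralizer of $e$. *)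

theory Defs
  imports "HOL-Analysis.Analysis"
begin

text \<open>Complex vector space structure on matrices (entrywise scalar multiplication),
  so that dimensions of subspaces of gl(m|2n) are complex dimensions.\<close>

definition mscale :: "'a::field \<Rightarrow> 'a^'n::finite^'m::finite \<Rightarrow> 'a^'n^'m" where
  "mscale c A = (\<chi> i j. c * A$i$j)"

interpretation mat: vector_space "mscale :: 'a::field \<Rightarrow> 'a^'n::finite^'m::finite \<Rightarrow> 'a^'n^'m"
  by unfold_locales (vector mscale_def algebra_simps)+

text \<open>The superspace V = V_0 \<oplus> V_1 has basis indexed by 'a + 'b:
  Inl indices span V_0 (dimension m = CARD('a)), Inr indices span V_1 (dimension CARD('b) = 2n).\<close>

fun par :: "'a + 'b \<Rightarrow> nat" where
  "par (Inl _) = 0" | "par (Inr _) = 1"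

text \<open>Homogeneous vectors of degree d, and homogeneous endomorphisms of degree i
  (i.e. elements of gl(m|2n)_i).\<close>
definition homog_vec :: "nat \<Rightarrow> complex^('a::finite+'b::finite) \<Rightarrow> bool" where
  "homog_vec d x \<longleftrightarrow> (\<forall>k. par k \<noteq> d \<longrightarrow> x$k = 0)"

definition gl_part :: "nat \<Rightarrow> (complex^('a::finite+'b::finite)^('a::finite+'b::finite)) set" where
  "gl_part i = {z. \<forall>r c. (par r + par c) mod 2 \<noteq> i \<longrightarrow> z$r$c = 0}"

text \<open>Bilinear form with Gram matrix G: phi(x,y) = x^T G y (complex bilinear).\<close>
definition bform :: "complex^('a::finite+'b::finite)^('a::finite+'b::finite) \<Rightarrow> complex^('a::finite+'b::finite) \<Rightarrow> complex^('a::finite+'b::finite) \<Rightarrow> complex" where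
  "bform G x y = (\<Sum>r\<in>UNIV. \<Sum>c\<in>UNIV. x$r * G$r$c * y$c)"

text \<open>Nondegenerate supersymmetric form: V_0 \<perp> V_1, symmetric on V_0, skew on V_1, nondegenerate.\<close>
definition supersym_form :: "complex^('a::finite+'b::finite)^('a::finite+'b::finite) \<Rightarrow> bool" where
  "supersym_form G \<longleftrightarrow>
     (\<forall>r c. par r \<noteq> par c \<longrightarrow> G$r$c = 0) \<and>
     (\<forall>i j. G$(Inl i)$(Inl j) = G$(Inl j)$(Inl i)) \<and>
     (\<forall>i j. G$(Inr i)$(Inr j) = - G$(Inr j)$(Inr i)) \<and>
     invertible G"

text \<open>osp(m|2n)_i for the form with Gram matrix G.\<close>
definition osp_part :: "complex^('a::finite+'b::finite)^('a::finite+'b::finite) \<Rightarrow> nat \<Rightarrow> (complex^('a::finite+'b::finite)^('a::finite+'b::finite)) set" where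
  "osp_part G i = {z \<in> gl_part i. \<forall>d x y. d \<in> {0,1} \<longrightarrow> homog_vec d x \<longrightarrow>
      bform G (z *v x) y = - ((-1) ^ (i * d)) * bform G x (z *v y)}"

text \<open>Supercommutator of homogeneous elements of degrees i and j.\<close>
definition sbracket :: "nat \<Rightarrow> nat \<Rightarrow> complex^'n::finite^'n \<Rightarrow> complex^'n::finite^'n \<Rightarrow> complex^'n::finite^'n" where
  "sbracket i j x y = x ** y - ((-1) ^ (i * j)) *\<^sub>R (y ** x)"

text \<open>Odd part of the centralizer of an even element e in a homogeneous subspace S.\<close>
definition odd_centralizer :: "complex^'n::finite^'n \<Rightarrow> (complex^'n::finite^'n) set \<Rightarrow> (complex^'n::finite^'n) set" where
  "odd_centralizer e S = {z \<in> S. sbracket 0 1 e z = 0}"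

definition nilpotent_mat :: "complex^'n::finite^'n \<Rightarrow> bool" where
  "nilpotent_mat N \<longleftrightarrow> (\<exists>k. ((\<lambda>A. N ** A) ^^ k) (mat 1) = 0)"

text \<open>Blocks of e restricted to V_0 and V_1.\<close>
definition blk0 :: "complex^('a::finite+'b::finite)^('a::finite+'b::finite) \<Rightarrow> complex^'a::finite^'a" where
  "blk0 e = (\<chi> i j. e$(Inl i)$(Inl j))"
definition blk1 :: "complex^('a::finite+'b::finite)^('a::finite+'b::finite) \<Rightarrow> complex^'b^'b" where
  "blk1 e = (\<chi> i j. e$(Inr i)$(Inr j))"

text \<open>Jordan type of a nilpotent N: p is a non-increasing list of positive integers and
  there is a basis consisting of Jordan chains v i 0, ..., v i (p_i - 1) with
  N (v i k) = v i (k+1) and N (v i (p_i - 1)) = 0.\<close>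
definition jordan_type :: "complex^'c::finite^'c \<Rightarrow> nat list \<Rightarrow> bool" where
  "jordan_type N p \<longleftrightarrow> sorted (rev p) \<and> (\<forall>x \<in> set p. 0 < x) \<and>
     (\<exists>v :: nat \<Rightarrow> nat \<Rightarrow> complex^'c.
        let S = {(i,k). i < length p \<and> k < p!i} in
        (\<forall>(i,k) \<in> S. N *v v i k = (if Suc k < p!i then v i (Suc k) else 0)) \<and>
        inj_on (\<lambda>(i,k). v i k) S \<and>
        \<not> vec.dependent ((\<lambda>(i,k). v i k) ` S) \<and>
        vec.span ((\<lambda>(i,k). v i k) ` S) = UNIV)"

end

theory Submission
  imports Defs
begin

definition mu :: "'m::finite \<Rightarrow> 'n::finite \<Rightarrow> 'a::field^'n^'m" where
  "mu r c = (\<chi> i j. if i = r \<and> j = c then 1 else 0)"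

definition matbasis :: "('a::field^'n::finite^'m::finite) set" where
  "matbasis = (\<lambda>(r,c). mu r c) ` UNIV"

lemma mscale_comp[simp]: "mscale c A $ i $ j = c * A $ i $ j"
  by (simp add: mscale_def)

lemma msum_comp: "(\<Sum>x\<in>S. f x :: 'a::field^'n::finite^'m::finite) $ i $ j = (\<Sum>x\<in>S. f x $ i $ j)"
  by (simp add: sum_component)

lemma mu_inj: "mu r c = (mu r' c' :: 'a::field^'n::finite^'m::finite) \<longleftrightarrow> r = r' \<and> c = c'"
proof
  assume "mu r c = (mu r' c' :: 'a::field^'n::finite^'m::finite)"
  then have "mu r c $ r $ c = (mu r' c' :: 'a::field^'n::finite^'m::finite) $ r $ c" by simp
  then show "r = r' \<and> c = c'" by (simp add: mu_def split: if_splits)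
qed simp

lemma matbasis_indep: "\<not> mat.dependent (matbasis :: ('a::field^'n::finite^'m::finite) set)"
proof (rule mat.independent_if_scalars_zero)
  show "finite (matbasis :: ('a::field^'n::finite^'m::finite) set)" unfolding matbasis_def by simp
  fix f :: "'a::field^'n::finite^'m::finite \<Rightarrow> 'a" and x :: "'a::field^'n::finite^'m::finite"
  assume s: "(\<Sum>x\<in>matbasis. mscale (f x) x) = 0" and x: "x \<in> matbasis"
  obtain r c where xrc: "x = mu r c" using x unfolding matbasis_def by auto
  have inj: "inj (\<lambda>(r,c). (mu r c :: 'a::field^'n::finite^'m::finite))"
    by (auto simp: inj_def mu_inj)
  have "0 = (\<Sum>x\<in>(matbasis :: ('a::field^'n::finite^'m::finite) set). mscale (f x) x) $ r $ c" using s by simp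
  also have "\<dots> = (\<Sum>y\<in>UNIV. f (mu (fst y) (snd y)) * (mu (fst y) (snd y) :: 'a::field^'n::finite^'m::finite) $ r $ c)"
    unfolding matbasis_def msum_comp
    by (subst sum.reindex[OF inj]) (simp add: case_prod_beta)
  also have "\<dots> = (\<Sum>y\<in>UNIV. if y = (r,c) then f (mu r c) else 0)"
    by (rule sum.cong) (auto simp: mu_def)
  also have "\<dots> = f x" by (simp add: xrc)
  finally show "f x = 0" by simp
qed

lemma mat_expand: "(A :: 'a::field^'n::finite^'m::finite) = (\<Sum>y\<in>UNIV. mscale (A $ fst y $ snd y) (mu (fst y) (snd y)))"
proof -
  have "\<And>i j. (\<Sum>y\<in>UNIV. mscale (A $ fst y $ snd y) (mu (fst y) (snd y) :: 'a::field^'n::finite^'m::finite)) $ i $ j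
      = (\<Sum>y\<in>UNIV. if y = (i,j) then A $ i $ j else 0)"
    unfolding msum_comp by (rule sum.cong) (auto simp: mu_def)
  then show ?thesis by (simp add: vec_eq_iff)
qed

lemma matbasis_span: "mat.span (matbasis :: ('a::field^'n::finite^'m::finite) set) = UNIV"
proof -
  have "A \<in> mat.span (matbasis :: ('a::field^'n::finite^'m::finite) set)" for A
    apply (subst mat_expand)
    apply (rule mat.span_sum)
    apply (rule mat.span_scale)
    apply (rule mat.span_base)
    apply (auto simp: matbasis_def)
    done
  then show ?thesis by auto
qed

interpretation mat: finite_dimensional_vector_space "mscale :: 'a::field \<Rightarrow> 'a^'n::finite^'m::finite \<Rightarrow> 'a^'n^'m" matbasis
  by unfold_locales (auto simp: matbasis_indep matbasis_span, simp add: matbasis_def)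

interpretation mat: finite_dimensional_vector_space_pair
  "mscale :: 'a::field \<Rightarrow> 'a^'n::finite^'m::finite \<Rightarrow> 'a^'n^'m" matbasis
  "mscale :: 'a::field \<Rightarrow> 'a^'n2::finite^'m2::finite \<Rightarrow> 'a^'n2^'m2" matbasis ..

definition chainS :: "nat list \<Rightarrow> (nat \<times> nat) set" where
  "chainS p = (SIGMA i:{..<length p}. {..<p!i})"

definition cv :: "(nat \<Rightarrow> nat \<Rightarrow> 'x) \<Rightarrow> nat \<times> nat \<Rightarrow> 'x" where
  "cv v = (\<lambda>(i,k). v i k)"

definition chainb :: "complex^'c::finite^'c \<Rightarrow> nat list \<Rightarrow> (nat \<Rightarrow> nat \<Rightarrow> complex^'c) \<Rightarrow> bool" where
  "chainb N p v \<longleftrightarrow> (\<forall>(i,k)\<in>chainS p. N *v v i k = (if Suc k < p!i then v i (Suc k) else 0))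
     \<and> inj_on (cv v) (chainS p) \<and> \<not> vec.dependent (cv v ` chainS p) \<and> vec.span (cv v ` chainS p) = UNIV"

lemma chainS_mem[simp]: "(i,k) \<in> chainS p \<longleftrightarrow> i < length p \<and> k < p!i"
  by (simp add: chainS_def)

lemma finite_chainS[simp]: "finite (chainS p)"
  by (simp add: chainS_def)

lemma cv_app[simp]: "cv v (i,k) = v i k" by (simp add: cv_def)

lemma chainS_eq: "{(i,k). i < length p \<and> k < p!i} = chainS p"
  by auto

lemma chainb_alt: "chainb N p v \<longleftrightarrow> (let S = {(i,k). i < length p \<and> k < p!i} in
        (\<forall>(i,k) \<in> S. N *v v i k = (if Suc k < p!i then v i (Suc k) else 0)) \<and>
        inj_on (\<lambda>(i,k). v i k) S \<and>
        \<not> vec.dependent ((\<lambda>(i,k). v i k) ` S) \<and>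
        vec.span ((\<lambda>(i,k). v i k) ` S) = UNIV)"
  unfolding chainb_def Let_def chainS_eq cv_def by (rule refl)

lemma jt_chainb: "jordan_type N p \<Longrightarrow> \<exists>v. chainb N p v"
  apply (unfold jordan_type_def chainb_alt)
  apply (erule conjE)+
  apply assumption
  done

lemma chain_step: "chainb N p v \<Longrightarrow> i < length p \<Longrightarrow> k < p!i \<Longrightarrow>
   N *v v i k = (if Suc k < p!i then v i (Suc k) else 0)"
  unfolding chainb_def apply (drule conjunct1) apply (drule bspec[of _ _ "(i,k)"]) by auto

lemma chain_pow:
  assumes "chainb N p v" "i < length p" "l < p!i"
  shows "((*v) N ^^ k) (v i l) = (if l + k < p!i then v i (l+k) else 0)"
proof (induction k)
  case 0 then show ?case using assms by simp
next
  case (Suc k)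
  show ?case
  proof (cases "l + k < p!i")
    case True
    then show ?thesis using Suc chain_step[OF assms(1,2) True] by simp
  next
    case False
    then show ?thesis using Suc by simp
  qed
qed

lemma chain_indep: "chainb N p v \<Longrightarrow> \<not> vec.dependent (cv v ` chainS p)"
  unfolding chainb_def by auto

lemma chain_inj: "chainb N p v \<Longrightarrow> inj_on (cv v) (chainS p)"
  unfolding chainb_def by auto

lemma chain_span: "chainb N p v \<Longrightarrow> vec.span (cv v ` chainS p) = UNIV"
  unfolding chainb_def by auto

lemma chain_nz: "chainb N p v \<Longrightarrow> i < length p \<Longrightarrow> k < p!i \<Longrightarrow> v i k \<noteq> 0"
proof
  assume c: "chainb N p v" "i < length p" "k < p!i" and z: "v i k = 0"
  have "v i k \<in> cv v ` chainS p" by (rule image_eqI[of _ _ "(i,k)"]) (use c in auto)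
  then have "vec.dependent (cv v ` chainS p)" using z vec.dependent_zero by simp
  then show False using chain_indep[OF c(1)] by simp
qed

lemma chain_vinj: "chainb N p v \<Longrightarrow> i < length p \<Longrightarrow> k < p!i \<Longrightarrow> i' < length p \<Longrightarrow> k' < p!i'
   \<Longrightarrow> v i k = v i' k' \<longleftrightarrow> i = i' \<and> k = k'"
proof -
  assume c: "chainb N p v" "i < length p" "k < p!i" "i' < length p" "k' < p!i'"
  have "cv v (i,k) = cv v (i',k') \<longleftrightarrow> (i,k) = (i',k')"
    by (rule inj_on_eq_iff[OF chain_inj[OF c(1)]]) (use c in auto)
  then show ?thesis by simp
qed

lemma chain_eq:
  fixes A A' :: "complex^'c::finite^'d::finite"
  assumes "chainb N p v" and "\<And>i k. i < length p \<Longrightarrow> k < p!i \<Longrightarrow> A *v v i k = A' *v v i k"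
  shows "A = A'"
proof -
  have "A *v x = A' *v x" for x
  proof (rule vec.linear_eq_on[OF matrix_vector_mul_linear_gen matrix_vector_mul_linear_gen])
    show "x \<in> vec.span (cv v ` chainS p)" using chain_span[OF assms(1)] by simp
    fix b assume "b \<in> cv v ` chainS p"
    then show "A *v b = A' *v b" using assms(2) by auto
  qed
  then show ?thesis by (simp add: matrix_eq)
qed

lemma intertw_pow:
  assumes "N2 ** B = B ** N1"
  shows "((*v) N2 ^^ k) (B *v x) = B *v (((*v) N1 ^^ k) x)"
proof (induction k)
  case (Suc k)
  have "N2 *v (B *v y) = B *v (N1 *v y)" for y
    by (simp add: matrix_vector_mul_assoc assms)
  then show ?case using Suc by simp
qed simp

lemma pow_mat:
  fixes N :: "'a::comm_semiring_1^'n::finite^'n"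
  shows "\<exists>P. \<forall>x. ((*v) N ^^ k) x = P *v x"
proof (induction k)
  case 0
  have "\<forall>x. ((*v) N ^^ 0) x = mat 1 *v x" by simp
  then show ?case by blast
next
  case (Suc k)
  then obtain P where "\<forall>x. ((*v) N ^^ k) x = P *v x" by blast
  then show ?case by (intro exI[of _ "N ** P"]) (simp add: matrix_vector_mul_assoc)
qed

lemma mv_sum: "(A::'a::comm_semiring_1^'n::finite^'m::finite) *v (\<Sum>x\<in>S. f x) = (\<Sum>x\<in>S. A *v f x)"
  by (induction S rule: infinite_finite_induct) (auto simp: matrix_vector_right_distrib)

lemma sum_mv: "(\<Sum>x\<in>S. f x :: 'a::comm_semiring_1^'n::finite^'m::finite) *v y = (\<Sum>x\<in>S. f x *v y)"
  by (induction S rule: infinite_finite_induct) (auto simp: matrix_vector_mult_add_rdistrib)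

lemma mscale_mv: "mscale c A *v x = c *s (A *v x)"
  by (simp add: mscale_def matrix_vector_mult_def vector_scalar_mult_def vec_eq_iff sum_distrib_left mult.assoc)

lemma pow_lin: "((*v) (N::complex^'n::finite^'n) ^^ k) (\<Sum>x\<in>S. c x *s f x) = (\<Sum>x\<in>S. c x *s ((*v) N ^^ k) (f x))"
proof -
  obtain P where P: "\<forall>x. ((*v) N ^^ k) x = P *v x" using pow_mat by blast
  show ?thesis by (simp add: P mv_sum vector_scalar_commute)
qed

lemma indep_coeffs:
  fixes h :: "'x \<Rightarrow> complex^'n::finite"
  assumes "\<not> vec.dependent W" "finite F" "inj_on h F" "h ` F \<subseteq> W"
    and "(\<Sum>x\<in>F. a x *s h x) = 0" and "x \<in> F"
  shows "a x = 0"
proof -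
  have ind: "\<not> vec.dependent (h ` F)" using assms(1,4) vec.dependent_mono by blast
  define c where "c y = a (the_inv_into F h y)" for y
  have "(\<Sum>y\<in>h ` F. c y *s y) = (\<Sum>x\<in>F. a x *s h x)"
    by (subst sum.reindex[OF assms(3)]) (simp add: c_def the_inv_into_f_f[OF assms(3)])
  then have "(\<Sum>y\<in>h ` F. c y *s y) = 0" using assms(5) by simp
  then have "c (h x) = 0" using ind vec.independent_explicit assms(6) by blast
  then show ?thesis by (simp add: c_def the_inv_into_f_f[OF assms(3) assms(6)])
qed

lemma matrix_add_rdistrib': "((A + B) ** C) = (A ** C) + (B ** C)"
  by (vector matrix_matrix_mult_def sum.distrib[symmetric] field_simps)

lemma mscale_mult_left: "(N :: 'a::field^_^_) ** mscale c A = mscale c (N ** A)"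
  by (simp add: mscale_def matrix_matrix_mult_def vec_eq_iff sum_distrib_left mult_ac)

lemma mscale_mult_right: "mscale c A ** (N :: 'a::field^_^_) = mscale c (A ** N)"
  by (simp add: mscale_def matrix_matrix_mult_def vec_eq_iff sum_distrib_left mult_ac)

lemma intertw_subspace: "mat.subspace {B :: complex^'a::finite^'b::finite. N2 ** B = B ** N1}"
  unfolding mat.subspace_def
  by (auto simp: matrix_add_ldistrib matrix_add_rdistrib' mscale_mult_left mscale_mult_right)

lemma pow_zero: "((*v) (N::complex^'n::finite^'n) ^^ k) 0 = 0"
proof -
  obtain P where P: "\<forall>x. ((*v) N ^^ k) x = P *v x" using pow_mat by blast
  show ?thesis by (simp add: P)
qed

lemma sum_shift:
  fixes d n :: nat
  assumes "\<And>l. l < d \<Longrightarrow> g l = 0" "d \<le> n"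
  shows "(\<Sum>l<n. g l) = (\<Sum>t<n-d. g (d+t))"
proof -
  have "{..<n} = {..<d} \<union> {d..<n}" using assms(2) by auto
  then have "(\<Sum>l<n. g l) = (\<Sum>l<d. g l) + (\<Sum>l\<in>{d..<n}. g l)"
    by (simp add: sum.union_disjoint ivl_disj_int)
  also have "(\<Sum>l<d. g l) = 0" using assms(1) by simp
  also have "(\<Sum>l\<in>{d..<n}. g l) = (\<Sum>t\<in>{0..<n-d}. g (t+d))"
    using sum.shift_bounds_nat_ivl[of g 0 d "n-d"] assms(2) by simp
  finally show ?thesis by (simp add: atLeast0LessThan add.commute)
qed

lemma intertwiner_dim:
  fixes N1 :: "complex^'a::finite^'a" and N2 :: "complex^'b::finite^'b"
  assumes v: "chainb N1 p v" and w: "chainb N2 q w" and ppos: "\<forall>x\<in>set p. 0 < x"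
  shows "mat.dim {B :: complex^'a^'b. N2 ** B = B ** N1} = (\<Sum>i<length p. \<Sum>j<length q. min (p!i) (q!j))"
proof -
  define H where "H = {B :: complex^'a^'b. N2 ** B = B ** N1}"
  define V where "V = cv v ` chainS p"
  have indV: "vec.independent V" using chain_indep[OF v] V_def by simp
  define T where "T = (SIGMA i:{..<length p}. SIGMA j:{..<length q}. {..<min (p!i) (q!j)})"
  have finT: "finite T" unfolding T_def by auto
  define off where "off i j = q!j - p!i" for i j
  have pp: "0 < p!i" if "i < length p" for i using ppos that by auto
  have offlt: "off i j + t < q!j" if "(i,j,t) \<in> T" for i j t
    using that unfolding T_def off_def by auto
  define gv where "gv \<tau> i' k = (case \<tau> of (i,j,t) \<Rightarrow> if i' = i \<and> off i j + t + k < q!j then w j (off i j + t + k) else 0)"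
    for \<tau> :: "nat \<times> nat \<times> nat" and i' k
  define g where "g \<tau> y = (case the_inv_into (chainS p) (cv v) y of (i',k) \<Rightarrow> gv \<tau> i' k)" for \<tau> y
  define M :: "nat \<times> nat \<times> nat \<Rightarrow> complex^'a^'b" where "M \<tau> = matrix (vec.construct V (g \<tau>))" for \<tau>
  have Mv: "M \<tau> *v v i' k = gv \<tau> i' k" if "i' < length p" "k < p!i'" for \<tau> i' k
  proof -
    have lin: "Vector_Spaces.linear (*s) (*s) (vec.construct V (g \<tau>))" by (rule vec.linear_construct[OF indV])
    have mem: "v i' k \<in> V" unfolding V_def by (rule image_eqI[of _ _ "(i',k)"]) (use that in auto)
    have "the_inv_into (chainS p) (cv v) (v i' k) = (i',k)"
      using the_inv_into_f_f[OF chain_inj[OF v], of "(i',k)"] that by simp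
    then show ?thesis unfolding M_def matrix_works[OF lin] vec.construct_basis[OF indV mem] g_def by simp
  qed
  have Mv0: "M (i',j,t) *v v i 0 = (if i' = i then w j (off i j + t) else 0)"
    if "i < length p" "(i',j,t) \<in> T" for i i' j t
    using Mv[OF that(1) pp[OF that(1)]] offlt[OF that(2)] by (auto simp: gv_def)
  have MH: "N2 ** M \<tau> = M \<tau> ** N1" if "\<tau> \<in> T" for \<tau>
  proof (rule chain_eq[OF v])
    fix i' k assume ik: "i' < length p" "k < p!i'"
    obtain i j t where \<tau>: "\<tau> = (i,j,t)" by (cases \<tau>)
    have j: "j < length q" using that \<tau> T_def by auto
    have lhs: "(N2 ** M \<tau>) *v v i' k = N2 *v gv \<tau> i' k"
      by (simp add: matrix_vector_mul_assoc[symmetric] Mv[OF ik])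
    have rhs: "(M \<tau> ** N1) *v v i' k = M \<tau> *v (if Suc k < p!i' then v i' (Suc k) else 0)"
      by (simp add: matrix_vector_mul_assoc[symmetric] chain_step[OF v ik])
    show "(N2 ** M \<tau>) *v v i' k = (M \<tau> ** N1) *v v i' k"
    proof (cases "Suc k < p!i'")
      case True
      have r: "(M \<tau> ** N1) *v v i' k = gv \<tau> i' (Suc k)" using rhs True Mv[OF ik(1) True] by simp
      show ?thesis
      proof (cases "i' = i \<and> off i j + t + k < q!j")
        case c: True
        show ?thesis using chain_step[OF w j, of "off i j + t + k"] c unfolding lhs r by (simp add: gv_def \<tau>)
      next
        case c: False
        then show ?thesis unfolding lhs r by (auto simp: gv_def \<tau>)
      qed
    next
      case False
      have r: "(M \<tau> ** N1) *v v i' k = 0" using rhs False by simp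
      show ?thesis
      proof (cases "i' = i \<and> off i j + t + k < q!j")
        case c: True
        have "\<not> Suc (off i j + t + k) < q!j" using False c ik unfolding off_def by auto
        then show ?thesis using chain_step[OF w j, of "off i j + t + k"] c unfolding lhs r by (simp add: gv_def \<tau>)
      next
        case c: False
        then show ?thesis unfolding lhs r by (auto simp: gv_def \<tau>)
      qed
    qed
  qed
  have Minj: "inj_on M T"
  proof (rule inj_onI)
    fix \<tau> \<tau>' assume t1: "\<tau> \<in> T" and t2: "\<tau>' \<in> T" and eq: "M \<tau> = M \<tau>'"
    obtain i j t where \<tau>: "\<tau> = (i,j,t)" by (cases \<tau>)
    obtain i' j' t' where \<tau>': "\<tau>' = (i',j',t')" by (cases \<tau>')
    have i: "i < length p" and j: "j < length q" using t1 \<tau> T_def by auto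
    have j': "j' < length q" using t2 \<tau>' T_def by auto
    have "M \<tau> *v v i 0 = M \<tau>' *v v i 0" using eq by simp
    then have e: "w j (off i j + t) = (if i' = i then w j' (off i j' + t') else 0)"
      using Mv0[OF i, of i j t] Mv0[OF i, of i' j' t'] t1 t2 \<tau> \<tau>' by simp
    have nz: "w j (off i j + t) \<noteq> 0" using chain_nz[OF w j offlt] t1 \<tau> by simp
    then have ii: "i' = i" using e by (auto split: if_splits)
    have "w j (off i j + t) = w j' (off i j' + t')" using e ii by simp
    moreover have t1': "(i,j,t) \<in> T" and t2': "(i,j',t') \<in> T" using t1 t2 \<tau> \<tau>' ii by auto
    ultimately have "j = j' \<and> off i j + t = off i j' + t'"
      using chain_vinj[OF w j offlt[OF t1'] j' offlt[OF t2']] by blast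
    then have "j = j'" "t = t'" by auto
    then show "\<tau> = \<tau>'" using \<tau> \<tau>' ii by simp
  qed
  have indM: "\<not> mat.dependent (M ` T)"
  proof (rule mat.independent_if_scalars_zero)
    show "finite (M ` T)" using finT by simp
    fix f :: "complex^'a^'b \<Rightarrow> complex" and x
    assume s: "(\<Sum>x\<in>M ` T. mscale (f x) x) = 0" and x: "x \<in> M ` T"
    obtain \<tau>0 where \<tau>0: "\<tau>0 \<in> T" "x = M \<tau>0" using x by auto
    obtain i0 j0 t0 where \<tau>0e: "\<tau>0 = (i0,j0,t0)" by (cases \<tau>0)
    have i0: "i0 < length p" using \<tau>0 \<tau>0e T_def by auto
    define h where "h \<tau> = w (fst (snd \<tau>)) (off i0 (fst (snd \<tau>)) + snd (snd \<tau>))" for \<tau> :: "nat \<times> nat \<times> nat"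
    define F where "F = {\<tau>\<in>T. fst \<tau> = i0}"
    have "(\<Sum>\<tau>\<in>T. mscale (f (M \<tau>)) (M \<tau>)) = 0" using s by (simp add: sum.reindex[OF Minj])
    then have "(\<Sum>\<tau>\<in>T. mscale (f (M \<tau>)) (M \<tau>)) *v v i0 0 = 0" by simp
    then have "(\<Sum>\<tau>\<in>T. f (M \<tau>) *s (M \<tau> *v v i0 0)) = 0" by (simp add: sum_mv mscale_mv)
    moreover have "(\<Sum>\<tau>\<in>T. f (M \<tau>) *s (M \<tau> *v v i0 0)) = (\<Sum>\<tau>\<in>T. if fst \<tau> = i0 then f (M \<tau>) *s h \<tau> else 0)"
    proof (rule sum.cong)
      fix \<tau> assume "\<tau> \<in> T" then show "f (M \<tau>) *s (M \<tau> *v v i0 0) = (if fst \<tau> = i0 then f (M \<tau>) *s h \<tau> else 0)"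
        using Mv0[OF i0] unfolding h_def by (cases \<tau>) auto
    qed simp
    ultimately have sF: "(\<Sum>\<tau>\<in>F. f (M \<tau>) *s h \<tau>) = 0" unfolding F_def by (simp add: sum.inter_filter[OF finT])
    have hinj: "inj_on h F"
    proof (rule inj_onI)
      fix \<tau> \<tau>' assume a1: "\<tau> \<in> F" and a2: "\<tau>' \<in> F" and eq: "h \<tau> = h \<tau>'"
      obtain i j t where \<tau>: "\<tau> = (i,j,t)" by (cases \<tau>)
      obtain i' j' t' where \<tau>': "\<tau>' = (i',j',t')" by (cases \<tau>')
      have ii: "i = i0" "i' = i0" using a1 a2 \<tau> \<tau>' F_def by auto
      have t1: "(i0,j,t) \<in> T" and t2: "(i0,j',t') \<in> T" using a1 a2 \<tau> \<tau>' ii F_def by auto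
      have j: "j < length q" and j': "j' < length q" using t1 t2 T_def by auto
      have "w j (off i0 j + t) = w j' (off i0 j' + t')" using eq \<tau> \<tau>' h_def by simp
      then have "j = j' \<and> off i0 j + t = off i0 j' + t'"
        using chain_vinj[OF w j offlt[OF t1] j' offlt[OF t2]] by blast
      then have "j = j'" "t = t'" by auto
      then show "\<tau> = \<tau>'" using \<tau> \<tau>' ii by simp
    qed
    have hF: "h ` F \<subseteq> cv w ` chainS q"
    proof
      fix y assume "y \<in> h ` F"
      then obtain i j t where "(i,j,t) \<in> F" "y = h (i,j,t)" by auto
      moreover then have "(i0,j,t) \<in> T" unfolding F_def by auto
      ultimately show "y \<in> cv w ` chainS q"
        using offlt[of i0 j t] unfolding h_def T_def
        by (intro image_eqI[of _ _ "(j, off i0 j + t)"]) auto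
    qed
    have "f (M \<tau>0) = 0"
      by (rule indep_coeffs[OF chain_indep[OF w] _ hinj hF sF]) (use finT \<tau>0 \<tau>0e F_def in auto)
    then show "f x = 0" using \<tau>0 by simp
  qed
  have MT: "M ` T \<subseteq> H" using MH unfolding H_def by auto
  have sub: "mat.subspace H" unfolding H_def by (rule intertw_subspace)
  have span: "H \<subseteq> mat.span (M ` T)"
  proof
    fix B assume "B \<in> H"
    then have BH: "N2 ** B = B ** N1" unfolding H_def by simp
    define W where "W = cv w ` chainS q"
    have finW: "finite W" unfolding W_def by simp
    have "\<forall>i. \<exists>c. B *v v i 0 = (\<Sum>y\<in>W. c y *s y)"
    proof
      fix i
      have "B *v v i 0 \<in> vec.span W" using chain_span[OF w] W_def by simp
      then show "\<exists>c. B *v v i 0 = (\<Sum>y\<in>W. c y *s y)" unfolding vec.span_finite[OF finW] by auto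
    qed
    then obtain c where c: "\<And>i. B *v v i 0 = (\<Sum>y\<in>W. c i y *s y)" by metis
    have cW: "B *v v i 0 = (\<Sum>x\<in>chainS q. c i (cv w x) *s cv w x)" for i
      using c[of i] unfolding W_def by (simp add: sum.reindex[OF chain_inj[OF w]])
    have vanish: "c i (w j l) = 0" if i: "i < length p" and j: "j < length q" and l: "l < off i j" for i j l
    proof -
      define h where "h x = w (fst x) (snd x + p!i)" for x :: "nat \<times> nat"
      define F where "F = {x \<in> chainS q. snd x + p!i < q!fst x}"
      have "((*v) N2 ^^ (p!i)) (B *v v i 0) = 0"
        using intertw_pow[OF BH] chain_pow[OF v i pp[OF i], of "p!i"] by simp
      then have "(\<Sum>x\<in>chainS q. c i (cv w x) *s ((*v) N2 ^^ (p!i)) (cv w x)) = 0"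
        unfolding cW pow_lin by simp
      moreover have "(\<Sum>x\<in>chainS q. c i (cv w x) *s ((*v) N2 ^^ (p!i)) (cv w x))
          = (\<Sum>x\<in>chainS q. if snd x + p!i < q!fst x then c i (cv w x) *s h x else 0)"
      proof (rule sum.cong)
        fix x assume "x \<in> chainS q"
        then show "c i (cv w x) *s ((*v) N2 ^^ (p!i)) (cv w x) = (if snd x + p!i < q!fst x then c i (cv w x) *s h x else 0)"
          using chain_pow[OF w, of "fst x" "snd x" "p!i"] unfolding h_def by (cases x) auto
      qed simp
      ultimately have sF: "(\<Sum>x\<in>F. c i (cv w x) *s h x) = 0"
        unfolding F_def by (simp add: sum.inter_filter)
      have hinj: "inj_on h F"
      proof (rule inj_onI)
        fix x y assume xy: "x \<in> F" "y \<in> F" "h x = h y"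
        obtain a b where ab: "x = (a,b)" by (cases x)
        obtain a' b' where ab': "y = (a',b')" by (cases y)
        have 1: "a < length q" "b + p!i < q!a" "a' < length q" "b' + p!i < q!a'"
          using xy ab ab' unfolding F_def by auto
        have "w a (b + p!i) = w a' (b' + p!i)" using xy(3) ab ab' h_def by simp
        then have "a = a' \<and> b + p!i = b' + p!i" using chain_vinj[OF w 1(1,2) 1(3,4)] by blast
        then show "x = y" using ab ab' by simp
      qed
      have hF: "h ` F \<subseteq> cv w ` chainS q"
      proof
        fix y assume "y \<in> h ` F"
        then obtain x where x: "x \<in> F" "y = h x" by auto
        obtain a b where ab: "x = (a,b)" by (cases x)
        show "y \<in> cv w ` chainS q" using x unfolding h_def F_def ab
          by (intro image_eqI[of _ _ "(a, b + p!i)"]) auto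
      qed
      have "(j,l) \<in> F" using j l unfolding F_def off_def by auto
      from indep_coeffs[OF chain_indep[OF w] _ hinj hF sF this] show ?thesis unfolding F_def by simp
    qed
    define a where "a \<tau> = (case \<tau> of (i,j,t) \<Rightarrow> c i (w j (off i j + t)))" for \<tau> :: "nat \<times> nat \<times> nat"
    define S where "S = (\<Sum>\<tau>\<in>T. mscale (a \<tau>) (M \<tau>))"
    have SH: "S \<in> H" unfolding S_def
      by (rule mat.subspace_sum[OF sub]) (use MT mat.subspace_scale[OF sub] in auto)
    have Sspan: "S \<in> mat.span (M ` T)" unfolding S_def
      by (rule mat.span_sum) (auto intro: mat.span_scale mat.span_base)
    have S0: "S *v v i 0 = B *v v i 0" if i: "i < length p" for i
    proof -
      have "S *v v i 0 = (\<Sum>\<tau>\<in>T. a \<tau> *s (M \<tau> *v v i 0))"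
        unfolding S_def by (simp add: sum_mv mscale_mv)
      also have "\<dots> = (\<Sum>i'<length p. \<Sum>j<length q. \<Sum>t<min (p!i') (q!j).
            if i' = i then c i (w j (off i j + t)) *s w j (off i j + t) else 0)"
      proof -
        define G where "G i' j t = (if i' = i then c i (w j (off i j + t)) *s w j (off i j + t) else 0)" for i' j t
        have "(\<Sum>i'<length p. \<Sum>j<length q. \<Sum>t<min (p!i') (q!j). G i' j t)
           = (\<Sum>\<tau>\<in>T. case \<tau> of (i',j,t) \<Rightarrow> G i' j t)"
        proof -
          have "(\<Sum>j<length q. \<Sum>t<min (p!i') (q!j). G i' j t)
              = (\<Sum>(j,t)\<in>(SIGMA j:{..<length q}. {..<min (p!i') (q!j)}). G i' j t)" for i'
            by (rule sum.Sigma) auto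
          then have "(\<Sum>i'<length p. \<Sum>j<length q. \<Sum>t<min (p!i') (q!j). G i' j t)
              = (\<Sum>i'<length p. \<Sum>(j,t)\<in>(SIGMA j:{..<length q}. {..<min (p!i') (q!j)}). G i' j t)"
            by simp
          also have "\<dots> = (\<Sum>\<tau>\<in>T. case \<tau> of (i',j,t) \<Rightarrow> G i' j t)"
            unfolding T_def by (rule sum.Sigma) auto
          finally show ?thesis .
        qed
        also have "\<dots> = (\<Sum>\<tau>\<in>T. a \<tau> *s (M \<tau> *v v i 0))"
        proof (rule sum.cong[OF refl])
          fix \<tau> assume "\<tau> \<in> T"
          then show "(case \<tau> of (i',j,t) \<Rightarrow> G i' j t) = a \<tau> *s (M \<tau> *v v i 0)"
            using Mv0[OF i] unfolding G_def a_def by (cases \<tau>) auto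
        qed
        finally show ?thesis unfolding G_def by simp
      qed
      also have "\<dots> = (\<Sum>j<length q. \<Sum>t<min (p!i) (q!j). c i (w j (off i j + t)) *s w j (off i j + t))"
      proof -
        have "(\<Sum>j<length q. \<Sum>t<min (p!i') (q!j).
            if i' = i then c i (w j (off i j + t)) *s w j (off i j + t) else 0)
          = (if i' = i then (\<Sum>j<length q. \<Sum>t<min (p!i) (q!j). c i (w j (off i j + t)) *s w j (off i j + t)) else 0)" for i'
          by (cases "i' = i") simp_all
        then show ?thesis using i by (simp only: sum.delta finite_lessThan lessThan_iff if_True)
      qed
      also have "\<dots> = (\<Sum>j<length q. \<Sum>l<q!j. c i (w j l) *s w j l)"
      proof (rule sum.cong[OF refl])
        fix j assume "j \<in> {..<length q}"
        then have j: "j < length q" by simp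
        have "(\<Sum>l<q!j. c i (w j l) *s w j l) = (\<Sum>t<q!j - off i j. c i (w j (off i j + t)) *s w j (off i j + t))"
          by (rule sum_shift) (use vanish[OF i j] in \<open>auto simp: off_def\<close>)
        moreover have "q!j - off i j = min (p!i) (q!j)" unfolding off_def by simp
        ultimately show "(\<Sum>t<min (p!i) (q!j). c i (w j (off i j + t)) *s w j (off i j + t)) = (\<Sum>l<q!j. c i (w j l) *s w j l)"
          by simp
      qed
      also have "\<dots> = (\<Sum>x\<in>chainS q. c i (cv w x) *s cv w x)"
        unfolding chainS_def cv_def by (subst sum.Sigma) (auto simp: case_prod_beta)
      also have "\<dots> = B *v v i 0" using cW by simp
      finally show ?thesis .
    qed
    define D where "D = B - S"
    have DH: "D \<in> H" unfolding D_def by (rule mat.subspace_diff[OF sub \<open>B \<in> H\<close> SH])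
    have "D = 0"
    proof (rule chain_eq[OF v])
      fix i k assume ik: "i < length p" "k < p!i"
      have "D *v v i 0 = 0" using S0[OF ik(1)] unfolding D_def by (simp add: matrix_vector_mult_diff_rdistrib)
      moreover have "v i k = ((*v) N1 ^^ k) (v i 0)" using chain_pow[OF v ik(1) pp[OF ik(1)], of k] ik by simp
      moreover have "N2 ** D = D ** N1" using DH H_def by simp
      ultimately have "D *v v i k = ((*v) N2 ^^ k) (D *v v i 0)"
        using intertw_pow[of N2 D N1 k "v i 0"] by simp
      then show "D *v v i k = 0 *v v i k" using \<open>D *v v i 0 = 0\<close> pow_zero[where N=N2 and k=k] by simp
    qed
    then have "B = S" unfolding D_def by simp
    then show "B \<in> mat.span (M ` T)" using Sspan by simp
  qed
  have "card (M ` T) = mat.dim H" by (rule mat.basis_card_eq_dim[OF MT span indM])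
  moreover have "card (M ` T) = card T" by (rule card_image[OF Minj])
  moreover have "card T = (\<Sum>i<length p. \<Sum>j<length q. min (p!i) (q!j))"
    unfolding T_def by simp
  ultimately show ?thesis unfolding H_def by simp
qed

definition b00 :: "'x^('a::finite+'b::finite)^('a+'b) \<Rightarrow> 'x^'a^'a" where
  "b00 z = (\<chi> i j. z$(Inl i)$(Inl j))"
definition b11 :: "'x^('a::finite+'b::finite)^('a+'b) \<Rightarrow> 'x^'b^'b" where
  "b11 z = (\<chi> i j. z$(Inr i)$(Inr j))"
lemma blk0_b00: "blk0 = b00" by (simp add: fun_eq_iff blk0_def b00_def)
lemma blk1_b11: "blk1 = b11" by (simp add: fun_eq_iff blk1_def b11_def)

definition b01 :: "'x^('a::finite+'b::finite)^('a+'b) \<Rightarrow> 'x^'b^'a" where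
  "b01 z = (\<chi> i j. z$(Inl i)$(Inr j))"
definition b10 :: "'x^('a::finite+'b::finite)^('a+'b) \<Rightarrow> 'x^'a^'b" where
  "b10 z = (\<chi> i j. z$(Inr i)$(Inl j))"
definition blk :: "'x^'a::finite^'a \<Rightarrow> 'x^'b::finite^'a \<Rightarrow> 'x^'a^'b \<Rightarrow> 'x^'b^'b \<Rightarrow> 'x^('a+'b)^('a+'b)" where
  "blk A B C D = (\<chi> r c. case r of Inl i \<Rightarrow> (case c of Inl j \<Rightarrow> A$i$j | Inr j \<Rightarrow> B$i$j)
                               | Inr i \<Rightarrow> (case c of Inl j \<Rightarrow> C$i$j | Inr j \<Rightarrow> D$i$j))"

lemma blk_comp[simp]:
  "blk A B C D $ Inl i $ Inl j = A$i$j" "blk A B C D $ Inl i $ Inr j' = B$i$j'"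
  "blk A B C D $ Inr i' $ Inl j = C$i'$j" "blk A B C D $ Inr i' $ Inr j' = D$i'$j'"
  by (simp_all add: blk_def)

lemma blk_proj[simp]:
  "b00 (blk A B C D) = A" "b01 (blk A B C D) = B" "b10 (blk A B C D) = C" "b11 (blk A B C D) = D"
  by (simp_all add: b00_def b11_def b01_def b10_def vec_eq_iff)

lemma blk_decomp: "z = blk (b00 z) (b01 z) (b10 z) (b11 z)"
  by (simp add: vec_eq_iff blk_def b00_def b11_def b01_def b10_def split: sum.splits)

lemma blk_eq_iff: "blk A B C D = blk A' B' C' D' \<longleftrightarrow> A = A' \<and> B = B' \<and> C = C' \<and> D = D'"
proof
  assume e: "blk A B C D = blk A' B' C' D'"
  show "A = A' \<and> B = B' \<and> C = C' \<and> D = D'"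
    using arg_cong[OF e, of b00] arg_cong[OF e, of b01] arg_cong[OF e, of b10] arg_cong[OF e, of b11] by simp
qed simp

lemma sum_UNIV_plus: "(\<Sum>x\<in>(UNIV :: ('a::finite+'b::finite) set). f x) = (\<Sum>i\<in>UNIV. f (Inl i)) + (\<Sum>j\<in>UNIV. f (Inr j))"
  using sum.Plus[of "UNIV::'a set" "UNIV::'b set" f] by (simp add: o_def)

lemma blk_mult: "blk A B C D ** blk A' B' C' D' =
   blk (A**A' + B**C') (A**B' + B**D') (C**A' + D**C') (C**B' + D**D')"
  unfolding vec_eq_iff
  apply (intro allI)
  subgoal for r c by (cases r; cases c) (simp_all add: matrix_matrix_mult_def sum_UNIV_plus)
  done

lemma blk_transpose: "transpose (blk A B C D) = blk (transpose A) (transpose C) (transpose B) (transpose D)"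
  by (simp add: vec_eq_iff transpose_def blk_def split: sum.splits)

lemma blk_add: "blk A B C D + blk A' B' C' D' = blk (A+A') (B+B') (C+C') (D+D')"
  by (simp add: vec_eq_iff blk_def split: sum.splits)

lemma blk_mscale: "mscale c (blk A B C D) = blk (mscale c A) (mscale c B) (mscale c C) (mscale c D)"
  by (simp add: vec_eq_iff blk_def split: sum.splits)

lemma blk_zero: "(0::'x::zero^('a::finite+'b::finite)^('a+'b)) = blk 0 0 0 0"
  by (simp add: vec_eq_iff blk_def split: sum.splits)

lemma blk_uminus: "- blk A B C D = blk (-A) (-B) (-C) (-D)"
  by (simp add: vec_eq_iff blk_def split: sum.splits)

lemma blk_minus: "blk A B C D - blk A' B' C' D' = blk (A-A') (B-B') (C-C') (D-D')"
  by (simp add: vec_eq_iff blk_def split: sum.splits)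

lemma blk_mat1: "(mat 1 :: 'x::zero_neq_one^('a::finite+'b::finite)^('a+'b)) = blk (mat 1) 0 0 (mat 1)"
  by (simp add: vec_eq_iff blk_def mat_def split: sum.splits)

lemma transpose_add: "transpose (A + B) = transpose A + transpose B"
  by (simp add: vec_eq_iff transpose_def)
lemma transpose_mscale: "transpose (mscale c A) = mscale c (transpose A)"
  by (simp add: vec_eq_iff transpose_def)
lemma transpose_uminus: "transpose (- A) = - transpose A"
  by (simp add: vec_eq_iff transpose_def)
lemma mult_uminus_left: "(- A) ** B = - (A ** (B::'x::comm_ring_1^_^_))"
  by (simp add: vec_eq_iff matrix_matrix_mult_def sum_negf)
lemma mult_uminus_right: "A ** (- B) = - (A ** (B::'x::comm_ring_1^_^_))"
  by (simp add: vec_eq_iff matrix_matrix_mult_def sum_negf)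

text \<open>bilinear form facts\<close>

lemma bform_left: "bform G (z *v x) y = bform (transpose z ** G) x y"
proof -
  have "bform G (z *v x) y = (\<Sum>r\<in>UNIV. \<Sum>c\<in>UNIV. \<Sum>k\<in>UNIV. z$r$k * x$k * G$r$c * y$c)"
    by (simp add: bform_def matrix_vector_mult_def sum_distrib_right)
  also have "\<dots> = (\<Sum>r\<in>UNIV. \<Sum>k\<in>UNIV. \<Sum>c\<in>UNIV. z$r$k * x$k * G$r$c * y$c)"
    by (rule sum.cong[OF refl], rule sum.swap)
  also have "\<dots> = (\<Sum>k\<in>UNIV. \<Sum>r\<in>UNIV. \<Sum>c\<in>UNIV. z$r$k * x$k * G$r$c * y$c)"
    by (rule sum.swap)
  also have "\<dots> = (\<Sum>k\<in>UNIV. \<Sum>c\<in>UNIV. \<Sum>r\<in>UNIV. z$r$k * x$k * G$r$c * y$c)"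
    by (rule sum.cong[OF refl], rule sum.swap)
  also have "\<dots> = bform (transpose z ** G) x y"
    unfolding bform_def matrix_matrix_mult_def transpose_def
    apply (simp only: vec_lambda_beta sum_distrib_left sum_distrib_right)
    apply (intro sum.cong refl)
    apply (simp only: mult_ac)
    done
  finally show ?thesis .
qed

lemma bform_right: "bform G x (z *v y) = bform (G ** z) x y"
proof -
  have "bform G x (z *v y) = (\<Sum>r\<in>UNIV. \<Sum>c\<in>UNIV. \<Sum>k\<in>UNIV. x$r * G$r$c * z$c$k * y$k)"
    by (simp add: bform_def matrix_vector_mult_def sum_distrib_left mult_ac)
  also have "\<dots> = (\<Sum>r\<in>UNIV. \<Sum>k\<in>UNIV. \<Sum>c\<in>UNIV. x$r * G$r$c * z$c$k * y$k)"
    by (rule sum.cong[OF refl], rule sum.swap)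
  also have "\<dots> = bform (G ** z) x y"
    unfolding bform_def matrix_matrix_mult_def
    apply (simp only: vec_lambda_beta sum_distrib_left sum_distrib_right)
    apply (intro sum.cong refl)
    apply (simp only: mult_ac)
    done
  finally show ?thesis .
qed

lemma bform_axis: "bform A (axis r 1) (axis c 1) = A$r$c"
proof -
  have "bform A (axis r 1) (axis c 1) = (\<Sum>r'\<in>UNIV. \<Sum>c'\<in>UNIV. if r' = r then (if c' = c then A$r$c else 0) else 0)"
    unfolding bform_def by (intro sum.cong refl) (simp add: axis_def)
  also have "\<dots> = (\<Sum>r'\<in>UNIV. if r' = r then A$r$c else 0)"
    by (intro sum.cong refl) (simp split: if_splits)
  also have "\<dots> = A$r$c" by simp
  finally show ?thesis .
qed

lemma homog_axis: "homog_vec (par r) (axis r 1)"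
  by (simp add: homog_vec_def axis_def)

lemma par01: "par r \<in> {0,1}" by (cases r) auto

lemma osp_char:
  fixes G z :: "complex^('a::finite+'b::finite)^('a+'b)"
  shows "z \<in> osp_part G i \<longleftrightarrow> z \<in> gl_part i \<and>
     (\<forall>r c. (transpose z ** G)$r$c = - ((-1) ^ (i * par r)) * (G ** z)$r$c)"
proof
  assume z: "z \<in> osp_part G i"
  then have gl: "z \<in> gl_part i" and cond: "\<And>d x y. d \<in> {0,1} \<Longrightarrow> homog_vec d x \<Longrightarrow>
      bform G (z *v x) y = - ((-1) ^ (i * d)) * bform G x (z *v y)"
    unfolding osp_part_def by auto
  have "(transpose z ** G)$r$c = - ((-1) ^ (i * par r)) * (G ** z)$r$c" for r c
    using cond[OF par01 homog_axis, of r "axis c 1"]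
    by (simp add: bform_left bform_right bform_axis)
  then show "z \<in> gl_part i \<and> (\<forall>r c. (transpose z ** G)$r$c = - ((-1) ^ (i * par r)) * (G ** z)$r$c)"
    using gl by blast
next
  assume a: "z \<in> gl_part i \<and> (\<forall>r c. (transpose z ** G)$r$c = - ((-1) ^ (i * par r)) * (G ** z)$r$c)"
  have "bform G (z *v x) y = - ((-1) ^ (i * d)) * bform G x (z *v y)"
    if hom: "homog_vec d x" for d x y
  proof -
    have pt: "x $ r * (transpose z ** G) $ r $ c * y $ c = - ((-1) ^ (i * d)) * (x $ r * (G ** z) $ r $ c * y $ c)" for r c
    proof (cases "par r = d")
      case True then show ?thesis using a by simp
    next
      case False then have "x$r = 0" using hom unfolding homog_vec_def by simp
      then show ?thesis by simp
    qed
    have "bform G (z *v x) y = (\<Sum>r\<in>UNIV. \<Sum>c\<in>UNIV. (- ((-1) ^ (i * d))) * (x$r * (G ** z)$r$c * y$c))"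
      unfolding bform_left unfolding bform_def using pt by simp
    also have "\<dots> = - ((-1) ^ (i * d)) * bform G x (z *v y)"
      unfolding bform_right unfolding bform_def by (simp add: sum_distrib_left)
    finally show ?thesis .
  qed
  then show "z \<in> osp_part G i" using a unfolding osp_part_def by auto
qed

lemma gl1_iff: "z \<in> gl_part 1 \<longleftrightarrow> b00 z = 0 \<and> b11 z = 0"
proof
  assume "z \<in> gl_part 1"
  then have "\<And>r c. (par r + par c) mod 2 \<noteq> 1 \<Longrightarrow> z$r$c = 0" unfolding gl_part_def by auto
  then show "b00 z = 0 \<and> b11 z = 0" by (simp add: b00_def b11_def vec_eq_iff)
next
  assume a: "b00 z = 0 \<and> b11 z = 0"
  have "z$r$c = 0" if "(par r + par c) mod 2 \<noteq> 1" for r c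
  proof (cases r; cases c)
    fix i j assume "r = Inl i" "c = Inl j"
    then show ?thesis using a by (simp add: b00_def vec_eq_iff)
  next
    fix i j assume "r = Inr i" "c = Inr j"
    then show ?thesis using a by (simp add: b11_def vec_eq_iff)
  qed (use that in auto)
  then show "z \<in> gl_part 1" unfolding gl_part_def by auto
qed

lemma gl0_iff: "z \<in> gl_part 0 \<longleftrightarrow> b01 z = 0 \<and> b10 z = 0"
proof
  assume "z \<in> gl_part 0"
  then have "\<And>r c. (par r + par c) mod 2 \<noteq> 0 \<Longrightarrow> z$r$c = 0" unfolding gl_part_def by auto
  then show "b01 z = 0 \<and> b10 z = 0" by (simp add: b01_def b10_def vec_eq_iff)
next
  assume a: "b01 z = 0 \<and> b10 z = 0"
  have "z$r$c = 0" if "(par r + par c) mod 2 \<noteq> 0" for r c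
  proof (cases r; cases c)
    fix i j assume "r = Inl i" "c = Inr j"
    then show ?thesis using a by (simp add: b01_def vec_eq_iff)
  next
    fix i j assume "r = Inr i" "c = Inl j"
    then show ?thesis using a by (simp add: b10_def vec_eq_iff)
  qed (use that in auto)
  then show "z \<in> gl_part 0" unfolding gl_part_def by auto
qed

lemma sign1_iff:
  fixes X Y :: "complex^('a::finite+'b::finite)^('a+'b)"
  shows "(\<forall>r c. X$r$c = - ((-1) ^ (1 * par r)) * Y$r$c) \<longleftrightarrow>
     b00 X = - b00 Y \<and> b01 X = - b01 Y \<and> b10 X = b10 Y \<and> b11 X = b11 Y"
proof
  assume "\<forall>r c. X$r$c = - ((-1) ^ (1 * par r)) * Y$r$c"
  then show "b00 X = - b00 Y \<and> b01 X = - b01 Y \<and> b10 X = b10 Y \<and> b11 X = b11 Y"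
    by (simp add: b00_def b01_def b10_def b11_def vec_eq_iff)
next
  assume a: "b00 X = - b00 Y \<and> b01 X = - b01 Y \<and> b10 X = b10 Y \<and> b11 X = b11 Y"
  show "\<forall>r c. X$r$c = - ((-1) ^ (1 * par r)) * Y$r$c"
  proof (intro allI)
    fix r c show "X$r$c = - ((-1) ^ (1 * par r)) * Y$r$c"
      using a by (cases r; cases c) (simp_all add: b00_def b01_def b10_def b11_def vec_eq_iff)
  qed
qed

lemma sign0_iff:
  fixes X Y :: "complex^('a::finite+'b::finite)^('a+'b)"
  shows "(\<forall>r c. X$r$c = - ((-1) ^ (0 * par r)) * Y$r$c) \<longleftrightarrow> X = - Y"
  by (simp add: vec_eq_iff)

lemma mscale_uminus: "mscale c (- A) = - mscale c A"
  by (simp add: vec_eq_iff)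
lemma mscale_zero: "mscale c 0 = 0"
  by (simp add: vec_eq_iff)

lemma jt_pos: "jordan_type N p \<Longrightarrow> \<forall>x\<in>set p. 0 < x"
  unfolding jordan_type_def by blast

lemma transpose_zero[simp]: "transpose 0 = 0"
  by (simp add: vec_eq_iff transpose_def)

theorem mainTheorem5:
  fixes G e :: "complex^('a::finite + 'b::finite)^('a + 'b)"
    and p q :: "nat list"
  assumes "supersym_form G"
    and "e \<in> osp_part G 0"
    and "nilpotent_mat e"
    and "jordan_type (blk0 e) p"
    and "jordan_type (blk1 e) q"
  shows "mat.dim (odd_centralizer e (osp_part G 1))
           = (\<Sum>i<length p. \<Sum>j<length q. min (p!i) (q!j))
      \<and> 2 * mat.dim (odd_centralizer e (osp_part G 1))
           = mat.dim (odd_centralizer e (gl_part 1 :: (complex^('a+'b)^('a+'b)) set))"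
proof -
  note sf = assms(1)[unfolded supersym_form_def]
  define e0 where "e0 = b00 e"
  define e1 where "e1 = b11 e"
  define G0 where "G0 = b00 G"
  define G1 where "G1 = b11 G"
  have Gc: "\<forall>r c. par r \<noteq> par c \<longrightarrow> G$r$c = 0" using sf by blast
  have G01: "b01 G = 0" "b10 G = 0" using Gc by (simp_all add: b01_def b10_def vec_eq_iff)
  have Gblk: "G = blk G0 0 0 G1" using blk_decomp[of G] G01 G0_def G1_def by simp
  have Gs0: "\<forall>i j. G$(Inl i)$(Inl j) = G$(Inl j)$(Inl i)" using sf by blast
  have Gs1: "\<forall>i j. G$(Inr i)$(Inr j) = - G$(Inr j)$(Inr i)" using sf by blast
  have G0sym: "transpose G0 = G0"
    unfolding vec_eq_iff G0_def b00_def transpose_def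
    by (intro allI) (simp add: Gs0[rule_format, of _ _])
  have G1skew: "transpose G1 = - G1"
    unfolding vec_eq_iff G1_def b11_def transpose_def
  proof (intro allI)
    fix i j
    show "(\<chi> i j. (\<chi> i j. G $ Inr i $ Inr j) $ j $ i) $ i $ j = (- (\<chi> i j. G $ Inr i $ Inr j)) $ i $ j"
      using Gs1[rule_format, of j i] by simp
  qed
  obtain Gi where Gi: "G ** Gi = mat 1" "Gi ** G = mat 1" using sf unfolding invertible_def by blast
  define P where "P = b00 Gi"
  have GP: "G0 ** P = mat 1" "P ** G0 = mat 1"
  proof -
    have "blk G0 0 0 G1 ** blk (b00 Gi) (b01 Gi) (b10 Gi) (b11 Gi) = blk (mat 1) 0 0 (mat 1)"
      using Gi(1) unfolding Gblk[symmetric] blk_decomp[of Gi, symmetric] blk_mat1[symmetric] .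
    then show "G0 ** P = mat 1" unfolding P_def blk_mult blk_eq_iff by simp
    have "blk (b00 Gi) (b01 Gi) (b10 Gi) (b11 Gi) ** blk G0 0 0 G1 = blk (mat 1) 0 0 (mat 1)"
      using Gi(2) unfolding Gblk[symmetric] blk_decomp[of Gi, symmetric] blk_mat1[symmetric] .
    then show "P ** G0 = mat 1" unfolding P_def blk_mult blk_eq_iff by simp
  qed
  have eosp: "e \<in> gl_part 0" and econd: "\<forall>r c. (transpose e ** G)$r$c = - ((-1) ^ (0 * par r)) * (G ** e)$r$c"
    using assms(2) osp_char by blast+
  have e01: "b01 e = 0" "b10 e = 0" using eosp gl0_iff by blast+
  have eblk: "e = blk e0 0 0 e1" using blk_decomp[of e] e01 e0_def e1_def by simp
  have "transpose e ** G = - (G ** e)" using econd sign0_iff by blast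
  then have "blk (transpose e0 ** G0) 0 0 (transpose e1 ** G1) = blk (- (G0 ** e0)) 0 0 (- (G1 ** e1))"
    unfolding eblk Gblk blk_transpose blk_mult blk_uminus by simp
  then have e0skew: "transpose e0 ** G0 = - (G0 ** e0)" and e1skew: "transpose e1 ** G1 = - (G1 ** e1)"
    unfolding blk_eq_iff by simp_all
  obtain v where v: "chainb e0 p v" using jt_chainb[OF assms(4)] unfolding e0_def blk0_b00 by blast
  obtain w where w: "chainb e1 q w" using jt_chainb[OF assms(5)] unfolding e1_def blk1_b11 by blast
  have ppos: "\<forall>x\<in>set p. 0 < x" using jt_pos assms(4) by blast
  have qpos: "\<forall>x\<in>set q. 0 < x" using jt_pos assms(5) by blast
  define H0 where "H0 = {B :: complex^'a^'b. e1 ** B = B ** e0}"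
  define H1 where "H1 = {C :: complex^'b^'a. e0 ** C = C ** e1}"
  define \<Sigma> where "\<Sigma> = (\<Sum>i<length p. \<Sum>j<length q. min (p!i) (q!j))"
  have dH0: "mat.dim H0 = \<Sigma>" unfolding H0_def \<Sigma>_def by (rule intertwiner_dim[OF v w ppos])
  have dH1: "mat.dim H1 = \<Sigma>"
  proof -
    have "mat.dim H1 = (\<Sum>j<length q. \<Sum>i<length p. min (q!j) (p!i))"
      unfolding H1_def by (rule intertwiner_dim[OF w v qpos])
    also have "\<dots> = \<Sigma>" unfolding \<Sigma>_def by (subst sum.swap) (simp add: min.commute)
    finally show ?thesis .
  qed
  have comm: "sbracket 0 1 e (blk 0 C B 0) = 0 \<longleftrightarrow> e0 ** C = C ** e1 \<and> e1 ** B = B ** e0" for B C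
  proof -
    have "sbracket 0 1 e (blk 0 C B 0) = blk 0 (e0 ** C - C ** e1) (e1 ** B - B ** e0) 0"
      unfolding sbracket_def eblk blk_mult by (simp add: blk_minus)
    then show ?thesis by (simp add: blk_zero blk_eq_iff)
  qed
  have oddform: "z = blk 0 (b01 z) (b10 z) 0" if "z \<in> gl_part 1" for z :: "complex^('a+'b)^('a+'b)"
    using that gl1_iff blk_decomp[of z] by metis
  have ztG: "transpose (blk 0 C B 0) ** G = blk 0 (transpose B ** G1) (transpose C ** G0) 0" for B C
    unfolding Gblk blk_transpose blk_mult by simp
  have Gz: "G ** blk 0 C B 0 = blk 0 (G0 ** C) (G1 ** B) 0" for B C
    unfolding Gblk blk_mult by simp
  have osp1: "blk 0 C B 0 \<in> osp_part G 1 \<longleftrightarrow> transpose B ** G1 = - (G0 ** C) \<and> transpose C ** G0 = G1 ** B" for B C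
  proof -
    have "blk 0 C B 0 \<in> gl_part 1" by (subst gl1_iff) simp
    then show ?thesis unfolding osp_char sign1_iff ztG Gz by simp
  qed
  \<comment> \<open>the osp part\<close>
  define emb where "emb B = blk 0 (- (P ** (transpose B ** G1))) B 0" for B :: "complex^'a^'b"
  have PeT: "P ** transpose e0 = - (e0 ** P)"
  proof -
    have "P ** transpose e0 = P ** transpose e0 ** (G0 ** P)" using GP by (simp add: matrix_mul_assoc)
    also have "\<dots> = P ** (transpose e0 ** G0) ** P" by (simp add: matrix_mul_assoc)
    also have "\<dots> = - (P ** G0 ** e0 ** P)" by (simp add: e0skew mult_uminus_left mult_uminus_right matrix_mul_assoc)
    also have "\<dots> = - (e0 ** P)" using GP by simp
    finally show ?thesis .
  qed
  have PtG0: "transpose P ** G0 = mat 1"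
  proof -
    have "transpose P ** G0 = transpose (transpose G0 ** P)" by (simp add: matrix_transpose_mul)
    also have "\<dots> = mat 1" using GP G0sym by simp
    finally show ?thesis .
  qed
  have Oosp: "odd_centralizer e (osp_part G 1) = emb ` H0"
  proof
    show "odd_centralizer e (osp_part G 1) \<subseteq> emb ` H0"
    proof
      fix z assume "z \<in> odd_centralizer e (osp_part G 1)"
      then have zo: "z \<in> osp_part G 1" and zc: "sbracket 0 1 e z = 0" unfolding odd_centralizer_def by auto
      have "z \<in> gl_part 1" using zo osp_char by blast
      then have zb: "z = blk 0 (b01 z) (b10 z) 0" by (rule oddform)
      define B where "B = b10 z"
      define C where "C = b01 z"
      have zb': "z = blk 0 C B 0" using zb B_def C_def by simp
      have "blk 0 C B 0 \<in> osp_part G 1" using zo zb' by simp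
      then have c1: "transpose B ** G1 = - (G0 ** C)" using osp1 by blast
      have "C = P ** G0 ** C" using GP by simp
      also have "\<dots> = - (P ** (transpose B ** G1))" using c1 by (simp add: matrix_mul_assoc[symmetric] mult_uminus_right)
      finally have "z = emb B" unfolding emb_def using zb' by simp
      moreover have "B \<in> H0"
      proof -
        have "sbracket 0 1 e (blk 0 C B 0) = 0" using zc zb' by simp
        then have "e1 ** B = B ** e0" using comm by blast
        then show ?thesis by (simp add: H0_def)
      qed
      ultimately show "z \<in> emb ` H0" by blast
    qed
  next
    show "emb ` H0 \<subseteq> odd_centralizer e (osp_part G 1)"
    proof
      fix z assume "z \<in> emb ` H0"
      then obtain B where B: "B \<in> H0" "z = emb B" by auto
      define C where "C = - (P ** (transpose B ** G1))"
      have zb: "z = blk 0 C B 0" using B C_def emb_def by simp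
      have BH: "e1 ** B = B ** e0" using B H0_def by simp
      have o1: "transpose B ** G1 = - (G0 ** C)"
        unfolding C_def using GP by (simp add: mult_uminus_right matrix_mul_assoc)
      have "transpose C = - (transpose G1 ** B ** transpose P)"
        unfolding C_def by (simp add: transpose_uminus matrix_transpose_mul matrix_mul_assoc)
      also have "\<dots> = G1 ** B ** transpose P"
        by (simp add: G1skew mult_uminus_left)
      finally have "transpose C ** G0 = G1 ** B ** (transpose P ** G0)" by (simp add: matrix_mul_assoc)
      then have o2: "transpose C ** G0 = G1 ** B" using PtG0 by simp
      have "e0 ** C = - (e0 ** P ** transpose B ** G1)" unfolding C_def by (simp add: mult_uminus_right matrix_mul_assoc)
      also have "\<dots> = P ** transpose e0 ** transpose B ** G1" by (simp add: PeT mult_uminus_left)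
      also have "\<dots> = P ** transpose (B ** e0) ** G1" by (simp add: matrix_transpose_mul matrix_mul_assoc)
      also have "\<dots> = P ** transpose (e1 ** B) ** G1" by (simp add: BH)
      also have "\<dots> = P ** transpose B ** (transpose e1 ** G1)" by (simp add: matrix_transpose_mul matrix_mul_assoc)
      also have "\<dots> = C ** e1" unfolding C_def by (simp add: e1skew mult_uminus_left mult_uminus_right matrix_mul_assoc)
      finally have c: "e0 ** C = C ** e1" .
      show "z \<in> odd_centralizer e (osp_part G 1)"
        unfolding odd_centralizer_def using osp1 o1 o2 comm c BH zb by simp
    qed
  qed
  have lin_emb: "Vector_Spaces.linear mscale mscale emb"
    unfolding Vector_Spaces.linear_iff emb_def
    by (simp add: mat.vector_space_axioms blk_add blk_mscale transpose_add transpose_mscale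
        matrix_add_ldistrib matrix_add_rdistrib' mscale_mult_left mscale_mult_right mscale_uminus mscale_zero)
  have inj_emb: "inj emb" unfolding inj_def emb_def by (simp add: blk_eq_iff)
  have dOosp: "mat.dim (odd_centralizer e (osp_part G 1)) = \<Sigma>"
    unfolding Oosp using mat.dim_image_eq[OF lin_emb, of H0] inj_emb dH0 by (simp add: inj_on_subset)
  \<comment> \<open>the gl part\<close>
  define eB where "eB B = blk 0 0 B 0" for B :: "complex^'a^'b"
  define eC where "eC C = blk 0 C 0 0" for C :: "complex^'b^'a"
  have lin_eB: "Vector_Spaces.linear mscale mscale eB"
    unfolding Vector_Spaces.linear_iff eB_def by (simp add: mat.vector_space_axioms blk_add blk_mscale mscale_zero)
  have lin_eC: "Vector_Spaces.linear mscale mscale eC"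
    unfolding Vector_Spaces.linear_iff eC_def by (simp add: mat.vector_space_axioms blk_add blk_mscale mscale_zero)
  have inj_eB: "inj eB" unfolding inj_def eB_def by (simp add: blk_eq_iff)
  have inj_eC: "inj eC" unfolding inj_def eC_def by (simp add: blk_eq_iff)
  have sH0: "mat.subspace H0" unfolding H0_def by (rule intertw_subspace)
  have sH1: "mat.subspace H1" unfolding H1_def by (rule intertw_subspace)
  have sX: "mat.subspace (eB ` H0)" by (rule mat.linear_subspace_image[OF lin_eB sH0])
  have sY: "mat.subspace (eC ` H1)" by (rule mat.linear_subspace_image[OF lin_eC sH1])
  have dX: "mat.dim (eB ` H0) = \<Sigma>" using mat.dim_image_eq[OF lin_eB, of H0] inj_eB dH0 by (simp add: inj_on_subset)
  have dY: "mat.dim (eC ` H1) = \<Sigma>" using mat.dim_image_eq[OF lin_eC, of H1] inj_eC dH1 by (simp add: inj_on_subset)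
  have XY: "mat.dim (eB ` H0 \<inter> eC ` H1) = 0"
    by (auto simp: eB_def eC_def blk_eq_iff blk_zero)
  have Ogl: "odd_centralizer e (gl_part 1) = {x + y |x y. x \<in> eB ` H0 \<and> y \<in> eC ` H1}"
  proof
    show "odd_centralizer e (gl_part 1) \<subseteq> {x + y |x y. x \<in> eB ` H0 \<and> y \<in> eC ` H1}"
    proof
      fix z assume "z \<in> odd_centralizer e (gl_part 1)"
      then have zo: "z \<in> gl_part 1" and zc: "sbracket 0 1 e z = 0" unfolding odd_centralizer_def by auto
      have zb: "z = blk 0 (b01 z) (b10 z) 0" using zo by (rule oddform)
      then have "sbracket 0 1 e (blk 0 (b01 z) (b10 z) 0) = 0" using zc by simp
      then have "b10 z \<in> H0" "b01 z \<in> H1" using comm unfolding H0_def H1_def by blast+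
      moreover have "z = eB (b10 z) + eC (b01 z)" unfolding eB_def eC_def blk_add using zb by simp
      ultimately show "z \<in> {x + y |x y. x \<in> eB ` H0 \<and> y \<in> eC ` H1}" by blast
    qed
  next
    show "{x + y |x y. x \<in> eB ` H0 \<and> y \<in> eC ` H1} \<subseteq> odd_centralizer e (gl_part 1)"
    proof
      fix z assume "z \<in> {x + y |x y. x \<in> eB ` H0 \<and> y \<in> eC ` H1}"
      then obtain B C where BC: "B \<in> H0" "C \<in> H1" "z = eB B + eC C" by blast
      then have zb: "z = blk 0 C B 0" unfolding eB_def eC_def blk_add by simp
      show "z \<in> odd_centralizer e (gl_part 1)"
      proof -
        have "blk 0 C B 0 \<in> gl_part 1" by (subst gl1_iff) simp
        then show ?thesis unfolding odd_centralizer_def using zb BC comm H0_def H1_def by simp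
      qed
    qed
  qed
  have dOgl: "mat.dim (odd_centralizer e (gl_part 1)) = 2 * \<Sigma>"
    using mat.dim_sums_Int[OF sX sY] XY dX dY Ogl by simp
  show ?thesis using dOosp dOgl \<Sigma>_def by simp
qed

end
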